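(* Let $n\ge 3$. The spectral radius of the power graph $P(G(n))$ of the gyrogroup $G(n)$ (defined in the context) satisfies $$\lambda_1(P(\mathbb{Z}_{2^{n-1}}))<\lambda_1(P(G(n)))\le \lambda_1(P(\mathbb{Z}_{2^{n-1}}))+\sqrt{2^{n-1}},$$ where $P(\mathbb{Z}_{2^{n-1}})$ is the power graph of the cyclic group of order $2^{n-1}$.
   Context: Let $n\ge 3$ be an integer and $m=2^{n-1}$. Let $P(n)=\{0,1,\dots,m-1\}$, $H(n)=\{m,m+1,\dots,2^n-1\}$ and $G(n)=P(n)\cup H(n)$. For $i,j\in G(n)$ let $t,s,k\in P(n)$ be the residues modulo $m$ (taken in $\{0,\dots,m-1\}$) of $i+j$, $i+(\frac m2-1)j$ and $(\frac m2+1)i+(\frac m2-1)j$, respectively, and define $i\oplus j=t$ if $i,j\in P(n)$; $i\oplus j=t+m$ if $i\in P(n),j\in H(n)$; $i\oplus j=s+m$ if $i\in H(n),j\in P(n)$; $i\oplus j=k$ if $i,j\in H(n)$. Then $(G(n),\oplus)$ is a gyrogroup with identity $e=0$. Powers are defined by $a^1=a$, $a^{k+1}=a^k\oplus a$ (in a group, the usual powers). The power graph $P(X)$ of $X$ (a group or $G(n)$) is the simple undirected graph with vertex set $X$ in which distinct vertices $u,v$ are adjacent if and only if $u^k=v$ or $v^k=u$ for some positive integer $k$. For a graph $\Gamma$, $\lambda_1(\Gamma)$ denotes the largest eigenvalue of its adjacency matrix (spectral radius). *)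

theory Defs
  imports "Jordan_Normal_Form.Char_Poly"
begin

text \<open>Gyrogroup G(n) on carrier {0..<2^n}; P(n) = {0..<m}, H(n) = {m..<2m}, m = 2^(n-1).\<close>
definition gyro_op :: "nat \<Rightarrow> nat \<Rightarrow> nat \<Rightarrow> nat" where
  "gyro_op n i j = (let m = 2 ^ (n - 1);
       t = (i + j) mod m;
       s = (i + (m div 2 - 1) * j) mod m;
       k = ((m div 2 + 1) * i + (m div 2 - 1) * j) mod m
     in if i < m \<and> j < m then t
        else if i < m \<and> m \<le> j then t + m
        else if m \<le> i \<and> j < m then s + m
        else k)"

definition cyc_op :: "nat \<Rightarrow> nat \<Rightarrow> nat \<Rightarrow> nat" where
  "cyc_op m i j = (i + j) mod m"

text \<open>gpow f a k = a^(k+1), with a^1 = a and a^(k+1) = a^k (op) a.\<close>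
primrec gpow :: "(nat \<Rightarrow> nat \<Rightarrow> nat) \<Rightarrow> nat \<Rightarrow> nat \<Rightarrow> nat" where
  "gpow f a 0 = a"
| "gpow f a (Suc k) = f (gpow f a k) a"

definition power_adj :: "(nat \<Rightarrow> nat \<Rightarrow> nat) \<Rightarrow> nat \<Rightarrow> nat \<Rightarrow> bool" where
  "power_adj f u v \<longleftrightarrow> u \<noteq> v \<and> (\<exists>k. gpow f u k = v \<or> gpow f v k = u)"

definition power_graph_adj_mat :: "nat \<Rightarrow> (nat \<Rightarrow> nat \<Rightarrow> nat) \<Rightarrow> real mat" where
  "power_graph_adj_mat N f = mat N N (\<lambda>(i, j). if power_adj f i j then 1 else 0)"

text \<open>Largest eigenvalue of a real matrix (adjacency matrices are symmetric, so all eigenvalues are real).\<close>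
definition lambda1 :: "real mat \<Rightarrow> real" where
  "lambda1 A = Max {x. eigenvalue A x}"

end

theory Submission
  imports Defs
begin

lemma eig_finite:
  fixes A :: "real mat"
  assumes "A \<in> carrier_mat N N"
  shows "finite {x. eigenvalue A x}"
proof -
  have "char_poly A \<noteq> 0" using degree_monic_char_poly[OF assms] by auto
  then have "finite {x. poly (char_poly A) x = 0}" by (rule poly_roots_finite)
  then show ?thesis using eigenvalue_root_char_poly[OF assms] by simp
qed

lemma gpow_cyc: "u < m \<Longrightarrow> gpow (cyc_op m) u k = ((k+1)*u) mod m"
proof (induction k)
  case (Suc k)
  have "((k+1)*u mod m + u) mod m = ((k+1)*u + u) mod m" by (simp add: mod_add_left_eq)
  then show ?case using Suc by (simp add: cyc_op_def algebra_simps)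
qed simp

lemma m_facts: assumes "n \<ge> 3" shows "(2::nat)^n = 2 * 2^(n-1)" "(4::nat) \<le> 2^(n-1)"
proof -
  show "(2::nat)^n = 2 * 2^(n-1)" using assms by (metis Suc_diff_1 less_le_trans numeral_3_eq_3 power_Suc zero_less_Suc le_refl less_Suc_eq_le)
  have "(2::nat)^2 \<le> 2^(n-1)" using assms by (intro power_increasing) auto
  then show "(4::nat) \<le> 2^(n-1)" by simp
qed

lemma gpow_gyro_P: assumes "u < 2^(n-1)"
  shows "gpow (gyro_op n) u k = ((k+1)*u) mod 2^(n-1)"
  using assms
proof (induction k)
  case 0 then show ?case by simp
next
  case (Suc k)
  have "gpow (gyro_op n) u k < 2^(n-1)" using Suc by simp
  then have "gyro_op n (gpow (gyro_op n) u k) u = (gpow (gyro_op n) u k + u) mod 2^(n-1)"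
    using Suc.prems unfolding gyro_op_def Let_def by simp
  moreover have "((k+1)*u mod 2^(n-1) + u) mod 2^(n-1) = ((k+1)*u + u) mod 2^(n-1)" by (simp add: mod_add_left_eq)
  ultimately show ?case using Suc by (simp add: algebra_simps)
qed

lemma gpow_gyro_H: assumes "n \<ge> 3" "2^(n-1) \<le> u" "u < 2^n"
  shows "gpow (gyro_op n) u k = (if even k then u else 0)"
proof (induction k)
  case 0 then show ?case by simp
next
  case (Suc k)
  define m :: nat where "m = 2^(n-1)"
  have m4: "4 \<le> m" and um: "u < 2*m" "m \<le> u" using m_facts[OF assms(1)] assms unfolding m_def by auto
  have "even m" unfolding m_def using assms(1) by simp
  then have ev: "m div 2 + 1 + (m div 2 - 1) = m" using m4 by auto
  have "((m div 2 + 1) * u + (m div 2 - 1) * u) = m * u" 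
    by (metis ev add_mult_distrib)
  then have uu: "gyro_op n u u = 0" using um m4 unfolding gyro_op_def Let_def m_def[symmetric] by auto
  have "(0 + u) mod m = u - m" using um by (simp add: le_mod_geq)
  then have u0: "gyro_op n 0 u = u" using um m4 unfolding gyro_op_def Let_def m_def[symmetric] by auto
  show ?case using Suc uu u0 by auto
qed


lemma solve_lin: fixes m u v :: nat assumes "m > 0" "u < m" "v < m" "gcd u m dvd v"
  shows "\<exists>k. (k+1)*u mod m = v"
proof (cases "u = 0")
  case True
  then have "m dvd v" using assms by simp
  then have "v = 0" using assms by (auto dest: dvd_imp_le)
  then show ?thesis using True by simp
next
  case False
  obtain x y where xy: "u * x = m * y + gcd u m" using bezout_nat[OF False] by blast
  obtain c where c: "v = gcd u m * c" using assms(4) by blast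
  have "u * (x*c) = m * (y*c) + v" using xy c by (simp add: algebra_simps)
  then have "(u*(x*c) + m*u) mod m = v" using assms by simp
  moreover have "(x*c + m - 1 + 1) = x*c + m" using assms by simp
  ultimately have "((x*c+m-1)+1)*u mod m = v" by (simp add: algebra_simps)
  then show ?thesis by blast
qed

lemma cyc_conn: fixes m u v :: nat assumes "m = 2^e" "u<m" "v<m"
  shows "\<exists>k. (k+1)*u mod m = v \<or> (k+1)*v mod m = u"
proof -
  have "gcd u m dvd 2^e" "gcd v m dvd 2^e" using assms by auto
  then obtain a b where a: "gcd u m = 2^a" and b: "gcd v m = 2^b"
    using divides_primepow_nat[of 2] by (meson two_is_prime_nat)
  have m0: "m > 0" using assms by simp
  show ?thesis
  proof (cases "a \<le> b")
    case True
    then have "gcd u m dvd gcd v m" using a b by (simp add: le_imp_power_dvd)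
    then have "gcd u m dvd v" by (meson dvd_trans gcd_dvd1)
    then show ?thesis using solve_lin[OF m0 assms(2,3)] by blast
  next
    case False
    then have "gcd v m dvd gcd u m" using a b by (simp add: le_imp_power_dvd)
    then have "gcd v m dvd u" by (meson dvd_trans gcd_dvd1)
    then show ?thesis using solve_lin[OF m0 assms(3,2)] by blast
  qed
qed


lemma adj_cyc: assumes "m = 2^e" "u<m" "v<m"
  shows "power_adj (cyc_op m) u v \<longleftrightarrow> u \<noteq> v"
  using cyc_conn[OF assms] gpow_cyc assms unfolding power_adj_def by metis

lemma adj_gyro: assumes n: "n \<ge> 3" and m: "m = 2^(n-1)" and uv: "u < 2*m" "v < 2*m"
  shows "power_adj (gyro_op n) u v \<longleftrightarrow> u \<noteq> v \<and> (u<m \<and> v<m \<or> u=0 \<and> m\<le>v \<or> v=0 \<and> m\<le>u)"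
proof -
  have N: "2^n = 2*m" using m_facts[OF n] m by simp
  have gp: "\<And>x k. x < m \<Longrightarrow> gpow (gyro_op n) x k = ((k+1)*x) mod m" using gpow_gyro_P m by simp
  have gh: "\<And>x k. m \<le> x \<Longrightarrow> x < 2*m \<Longrightarrow> gpow (gyro_op n) x k = (if even k then x else 0)"
    using gpow_gyro_H[OF n] m N by simp
  have m0: "m > 0" using m by simp
  show ?thesis
  proof (cases "u < m")
    case u: True
    show ?thesis
    proof (cases "v < m")
      case True
      then show ?thesis using u cyc_conn[OF m u True] gp unfolding power_adj_def by metis
    next
      case False
      have a: "gpow (gyro_op n) u k \<noteq> v" for k using gp[OF u, of k] False m0
        by (metis mod_less_divisor leI less_le_trans)
      have b: "gpow (gyro_op n) v k = u \<longleftrightarrow> u = 0 \<and> odd k" for k using gh[of v k] False uv u by auto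
      have "power_adj (gyro_op n) u v \<longleftrightarrow> u = 0" unfolding power_adj_def using a b False u
        by (metis odd_one)
      then show ?thesis using u False by auto
    qed
  next
    case u: False
    show ?thesis
    proof (cases "v < m")
      case True
      have a: "gpow (gyro_op n) v k \<noteq> u" for k using gp[OF True, of k] u m0
        by (metis mod_less_divisor leI less_le_trans)
      have b: "gpow (gyro_op n) u k = v \<longleftrightarrow> v = 0 \<and> odd k" for k using gh[of u k] True uv u by auto
      have "power_adj (gyro_op n) u v \<longleftrightarrow> v = 0" unfolding power_adj_def using a b True u
        by (metis odd_one)
      then show ?thesis using u True by auto
    next
      case False
      have "\<not> power_adj (gyro_op n) u v" unfolding power_adj_def using gh[of u] gh[of v] u False uv m0
        by auto
      then show ?thesis using u False m0 by auto
    qed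
  qed
qed

lemma sum_ne: fixes f :: "nat \<Rightarrow> real" assumes "i < m"
  shows "(\<Sum>j\<in>{0..<m}. if i \<noteq> j then f j else 0) = (\<Sum>j\<in>{0..<m}. f j) - f i"
proof -
  have "(\<Sum>j\<in>{0..<m}. if i \<noteq> j then f j else 0) = (\<Sum>j\<in>{0..<m}. f j - (if i = j then f j else 0))"
    by (rule sum.cong) auto
  also have "\<dots> = (\<Sum>j\<in>{0..<m}. f j) - f i" using assms by (simp add: sum_subtractf)
  finally show ?thesis .
qed

lemma row_cyc: assumes "m = 2^e" "i < m" "dim_vec v = m"
  shows "(power_graph_adj_mat m (cyc_op m) *\<^sub>v v) $ i = (\<Sum>j\<in>{0..<m}. v$j) - v$i"
proof -
  have "(power_graph_adj_mat m (cyc_op m) *\<^sub>v v) $ i = (\<Sum>j\<in>{0..<m}. (if power_adj (cyc_op m) i j then 1 else 0) * v$j)"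
    using assms unfolding power_graph_adj_mat_def by (simp add: scalar_prod_def)
  also have "\<dots> = (\<Sum>j\<in>{0..<m}. if i \<noteq> j then v$j else 0)"
    by (rule sum.cong) (use adj_cyc[OF assms(1,2)] in auto)
  finally show ?thesis using sum_ne[OF assms(2)] by simp
qed


lemma row_gyro: assumes n: "n \<ge> 3" and m: "m = 2^(n-1)" and i: "i < 2*m" and dv: "dim_vec v = 2*m"
  shows "(power_graph_adj_mat (2^n) (gyro_op n) *\<^sub>v v) $ i =
     (if i = 0 then (\<Sum>j\<in>{0..<m}. v$j) - v$0 + (\<Sum>j\<in>{m..<2*m}. v$j)
      else if i < m then (\<Sum>j\<in>{0..<m}. v$j) - v$i else v$0)"
proof -
  have N: "2^n = 2*m" using m_facts[OF n] m by simp
  have m0: "m > 0" using m by simp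
  define f where "f j = (if power_adj (gyro_op n) i j then 1 else 0) * v$j" for j
  have "(power_graph_adj_mat (2^n) (gyro_op n) *\<^sub>v v) $ i = (\<Sum>j\<in>{0..<2*m}. f j)"
    using i dv unfolding power_graph_adj_mat_def f_def N by (simp add: scalar_prod_def)
  also have "\<dots> = (\<Sum>j\<in>{0..<m}. f j) + (\<Sum>j\<in>{m..<2*m}. f j)"
    by (rule sum.atLeastLessThan_concat[symmetric]) auto
  finally have e: "(power_graph_adj_mat (2^n) (gyro_op n) *\<^sub>v v) $ i = (\<Sum>j\<in>{0..<m}. f j) + (\<Sum>j\<in>{m..<2*m}. f j)" .
  have adj: "\<And>j. j < 2*m \<Longrightarrow> power_adj (gyro_op n) i j \<longleftrightarrow> i \<noteq> j \<and> (i<m \<and> j<m \<or> i=0 \<and> m\<le>j \<or> j=0 \<and> m\<le>i)"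
    using adj_gyro[OF n m i] by simp
  show ?thesis
  proof (cases "i < m")
    case True
    have s1: "(\<Sum>j\<in>{0..<m}. f j) = (\<Sum>j\<in>{0..<m}. if i \<noteq> j then v$j else 0)"
      by (rule sum.cong) (use adj True in \<open>auto simp: f_def\<close>)
    have s2: "(\<Sum>j\<in>{m..<2*m}. f j) = (\<Sum>j\<in>{m..<2*m}. if i = 0 then v$j else 0)"
      by (rule sum.cong) (use adj True in \<open>auto simp: f_def\<close>)
    show ?thesis using e s1 s2 sum_ne[OF True] True by auto
  next
    case False
    have s1: "(\<Sum>j\<in>{0..<m}. f j) = (\<Sum>j\<in>{0..<m}. if j = 0 then v$j else 0)"
      by (rule sum.cong) (use adj False in \<open>auto simp: f_def\<close>)
    have s2: "(\<Sum>j\<in>{m..<2*m}. f j) = (\<Sum>j\<in>{m..<2*m}. 0)"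
      by (rule sum.cong) (use adj False in \<open>auto simp: f_def\<close>)
    show ?thesis using e s1 s2 False m0 by auto
  qed
qed


lemma vec_comp: assumes "A *\<^sub>v v = k \<cdot>\<^sub>v v" "i < dim_vec v"
  shows "(A *\<^sub>v v) $ i = k * v $ i"
  using assms by (metis index_smult_vec(1))

lemma cyc_lambda1: assumes "m = 2^e" "m \<ge> 2"
  shows "lambda1 (power_graph_adj_mat m (cyc_op m)) = real m - 1"
proof -
  let ?K = "power_graph_adj_mat m (cyc_op m)"
  have car: "?K \<in> carrier_mat m m" unfolding power_graph_adj_mat_def by simp
  have sub: "x = real m - 1 \<or> x = -1" if evx: "eigenvalue ?K x" for x
  proof (rule disjCI)
    assume xne: "x \<noteq> -1"
    obtain v where v: "v \<in> carrier_vec m" "v \<noteq> 0\<^sub>v m" "?K *\<^sub>v v = x \<cdot>\<^sub>v v"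
      using evx car unfolding eigenvalue_def eigenvector_def by auto
    define S where "S = (\<Sum>j\<in>{0..<m}. v$j)"
    have r: "S - v$i = x * v$i" if "i < m" for i
      using row_cyc[OF assms(1) that, of v] vec_comp[OF v(3), of i] v(1) that unfolding S_def by auto
    have vi: "v$i = S/(x+1)" if "i<m" for i
    proof -
      have "x + 1 \<noteq> 0" using xne by auto
      moreover have "v$i * (x+1) = S" using r[OF that] by (simp add: algebra_simps)
      ultimately show ?thesis by (simp add: field_simps)
    qed
    have "(\<Sum>j\<in>{0..<m}. v$j) = (\<Sum>j\<in>{0..<m}. S/(x+1))" by (rule sum.cong) (auto simp: vi)
    then have "S = (\<Sum>j\<in>{0..<m}. S/(x+1))" unfolding S_def[symmetric] .
    then have Seq: "S = real m * (S/(x+1))" by simp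
    have "S \<noteq> 0"
    proof
      assume "S = 0"
      then have "v = 0\<^sub>v m" using vi v(1) by (intro eq_vecI) auto
      then show False using v(2) by simp
    qed
    have "x + 1 \<noteq> 0" using xne by auto
    then have "S * (x+1) = real m * S" using Seq by (simp add: field_simps)
    then have "x + 1 = real m" using \<open>S \<noteq> 0\<close> by (simp add: mult.commute)
    then show "x = real m - 1" by simp
  qed
  have ev: "eigenvalue ?K (real m - 1)"
  proof -
    let ?w = "vec m (\<lambda>_. 1::real)"
    have "?K *\<^sub>v ?w = (real m - 1) \<cdot>\<^sub>v ?w"
    proof (rule eq_vecI)
      fix i assume "i < dim_vec ((real m - 1) \<cdot>\<^sub>v ?w)"
      then have i: "i < m" by simp
      show "(?K *\<^sub>v ?w) $ i = ((real m - 1) \<cdot>\<^sub>v ?w) $ i"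
        using row_cyc[OF assms(1) i, of ?w] i by simp
    qed (simp add: power_graph_adj_mat_def)
    moreover have "?w \<noteq> 0\<^sub>v m" using assms(2)
      by (metis index_vec index_zero_vec(1) zero_less_numeral less_le_trans zero_neq_one)
    ultimately show ?thesis unfolding eigenvalue_def eigenvector_def power_graph_adj_mat_def
      by (intro exI[of _ ?w]) auto
  qed
  show ?thesis unfolding lambda1_def
  proof (rule Max_eqI)
    show "finite {x. eigenvalue ?K x}" by (rule eig_finite[OF car])
    show "y \<le> real m - 1" if "y \<in> {x. eigenvalue ?K x}" for y
      using sub[of y] that assms(2) by auto
  qed (use ev in auto)
qed


lemma alg: fixes x m S T v0 :: real
  assumes "x > m" "m \<ge> 4" "S*(x+1) = v0*(x+1) + (m-1)*S" "x*v0 = S - v0 + T" "x*T = m*v0"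
  shows "v0 = 0"
proof -
  have a: "S*(x+2-m) = v0*(x+1)" using assms(3) by (simp add: algebra_simps)
  have "x*(x+2-m)*(x*v0) = x*(x+2-m)*(S - v0 + T)" using assms(4) by simp
  also have "\<dots> = x*(x+2-m)*S - x*(x+2-m)*v0 + x*(x+2-m)*T" by (simp add: algebra_simps)
  also have "x*(x+2-m)*S = x*(v0*(x+1))" by (subst a[symmetric]) (simp add: ac_simps)
  also have "x*(x+2-m)*T = (x+2-m)*(m*v0)" by (subst assms(5)[symmetric]) (simp add: ac_simps)

  finally have "v0 * (x^2*(x+2-m) - (m-1)*x - m*(x+2-m)) = 0"
    by (simp add: algebra_simps power2_eq_square)
  moreover have "x^2*(x+2-m) - (m-1)*x - m*(x+2-m) > 0"
  proof -
    have "x*x > m*x" using assms by (intro mult_strict_right_mono) auto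
    moreover have "m*x > m*1" using assms by (intro mult_strict_left_mono) auto
    ultimately have h1: "x^2 - m > 0" by (simp add: power2_eq_square)
    have "(x+2-m)*(x^2-m) \<ge> 2*(x^2-m)" using h1 assms(1) by (intro mult_right_mono) auto
    moreover have "2*(x^2-m) - (m-1)*x > 0"
    proof -
      have e1: "x*x > m*x" using assms by (intro mult_strict_right_mono) auto
      have "m*(x-2) \<ge> 0" using assms by simp
      then have e2: "m*x - 2*m \<ge> 0" by (simp add: algebra_simps)
      have "2*(x^2-m) - (m-1)*x = 2*(x*x) - 2*m - m*x + x" by (simp add: power2_eq_square algebra_simps)
      then show ?thesis using e1 e2 assms by linarith
    qed
    ultimately show ?thesis by (simp add: algebra_simps)
  qed
  ultimately show ?thesis by simp
qed


lemma gyro_upper: assumes n: "n \<ge> 3" and m: "m = 2^(n-1)"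
  and evx: "eigenvalue (power_graph_adj_mat (2^n) (gyro_op n)) x"
  shows "x \<le> real m"
proof (rule ccontr)
  assume "\<not> x \<le> real m"
  then have xm: "x > real m" by simp
  have N: "2^n = 2*m" using m_facts[OF n] m by simp
  have m4: "m \<ge> 4" using m_facts[OF n] m by simp
  let ?A = "power_graph_adj_mat (2^n) (gyro_op n)"
  obtain v where v: "v \<in> carrier_vec (2*m)" "v \<noteq> 0\<^sub>v (2*m)" "?A *\<^sub>v v = x \<cdot>\<^sub>v v"
    using evx unfolding eigenvalue_def eigenvector_def power_graph_adj_mat_def N by auto
  define S where "S = (\<Sum>j\<in>{0..<m}. v$j)"
  define T where "T = (\<Sum>j\<in>{m..<2*m}. v$j)"
  have r: "(if i = 0 then S - v$0 + T else if i < m then S - v$i else v$0) = x * v$i" if "i < 2*m" for i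
    using row_gyro[OF n m that, of v] vec_comp[OF v(3), of i] v(1) that unfolding S_def T_def by auto
  have x0: "x > 0" "x + 1 > 0" using xm by auto
  have r0: "S - v$0 + T = x * v$0" using r[of 0] m4 by simp
  have vi: "v$i = S/(x+1)" if "0 < i" "i < m" for i
  proof -
    have "S - v$i = x * v$i" using r[of i] that by simp
    then have "v$i * (x+1) = S" by (simp add: algebra_simps)
    then show ?thesis using x0 by (simp add: field_simps)
  qed
  have vh: "v$h = v$0/x" if "m \<le> h" "h < 2*m" for h
  proof -
    have "v$0 = x * v$h" using r[of h] that m4 by simp
    then show ?thesis using x0 by (simp add: field_simps)
  qed
  have "T = (\<Sum>j\<in>{m..<2*m}. v$0/x)" unfolding T_def by (rule sum.cong) (auto simp: vh)
  then have "T = m * (v$0/x)" by simp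
  then have eT: "x*T = m * v$0" using x0 by (simp add: field_simps)
  have "S = v$0 + (\<Sum>j\<in>{Suc 0..<m}. v$j)" unfolding S_def using m4 by (subst sum.atLeast_Suc_lessThan) auto
  also have "(\<Sum>j\<in>{Suc 0..<m}. v$j) = (\<Sum>j\<in>{Suc 0..<m}. S/(x+1))" by (rule sum.cong) (auto simp: vi)
  finally have "S = v$0 + (m-1) * (S/(x+1))" using m4 by simp
  then have eS: "S*(x+1) = v$0*(x+1) + (real m-1)*S" using x0 m4 by (simp add: field_simps)
  have v00: "v$0 = 0" using alg[of "real m" x S "v$0" T] xm m4 eS r0 eT by (simp add: algebra_simps)
  then have "S*(x+2-m) = 0" using eS by (simp add: algebra_simps)
  moreover have "x + 2 - m \<noteq> 0" using xm by simp
  ultimately have S0: "S = 0" by simp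
  have "v = 0\<^sub>v (2*m)"
  proof (rule eq_vecI)
    fix i assume "i < dim_vec (0\<^sub>v (2*m))"
    then have i: "i < 2*m" by simp
    show "v $ i = 0\<^sub>v (2*m) $ i"
      using i v00 S0 vi[of i] vh[of i] by (cases "i = 0"; cases "i < m") auto
  qed (use v(1) in simp)
  then show False using v(2) by simp
qed


lemma gyro_exists: assumes n: "n \<ge> 3" and m: "m = 2^(n-1)"
  shows "\<exists>\<mu>. eigenvalue (power_graph_adj_mat (2^n) (gyro_op n)) \<mu> \<and> \<mu> > real m - 1"
proof -
  have N: "2^n = 2*m" using m_facts[OF n] m by simp
  have m4: "m \<ge> 4" using m_facts[OF n] m by simp
  define M where "M = real m"
  have M4: "M \<ge> 4" using m4 unfolding M_def by simp
  define g where "g y = y^2*(y+2-M) - (M-1)*y - M*(y+2-M)" for y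
  have g1: "g (M-1) \<le> 0" unfolding g_def by (simp add: power2_eq_square algebra_simps) (use M4 in linarith)
  have g2: "0 \<le> g M" unfolding g_def using M4 by (simp add: power2_eq_square algebra_simps)
  have "continuous_on {M-1..M} g" unfolding g_def by (intro continuous_intros)
  then obtain \<mu> where mu: "M-1 \<le> \<mu>" "\<mu> \<le> M" "g \<mu> = 0" using IVT'[of g "M-1" 0 M] g1 g2 by auto
  have "\<mu> \<noteq> M-1"
  proof
    assume "\<mu> = M - 1"
    moreover have "g (M-1) = -M" unfolding g_def by (simp add: power2_eq_square algebra_simps)
    ultimately have "g \<mu> = -M" by simp
    then show False using mu M4 by simp
  qed
  then have mu1: "\<mu> > M - 1" using mu by simp
  then have mp: "\<mu> > 0" "\<mu>+2-M > 0" using M4 by auto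
  define c where "c = 1/(\<mu>+2-M)"
  let ?A = "power_graph_adj_mat (2^n) (gyro_op n)"
  define w where "w = vec (2*m) (\<lambda>j. if j = 0 then 1 else if j < m then c else 1/\<mu>)"
  have dw: "dim_vec w = 2*m" unfolding w_def by simp
  have "(\<Sum>j\<in>{0..<m}. w$j) = w$0 + (\<Sum>j\<in>{Suc 0..<m}. w$j)" using m4 by (subst sum.atLeast_Suc_lessThan) auto
  also have "(\<Sum>j\<in>{Suc 0..<m}. w$j) = (\<Sum>j\<in>{Suc 0..<m}. c)" by (rule sum.cong) (auto simp: w_def)
  finally have S: "(\<Sum>j\<in>{0..<m}. w$j) = 1 + (M-1)*c" using m4 unfolding M_def by (simp add: w_def of_nat_diff)
  have "(\<Sum>j\<in>{m..<2*m}. w$j) = (\<Sum>j\<in>{m..<2*m}. 1/\<mu>)" by (rule sum.cong) (auto simp: w_def)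
  then have T: "(\<Sum>j\<in>{m..<2*m}. w$j) = M/\<mu>" unfolding M_def by simp
  have key0: "(M-1)*c + M/\<mu> = \<mu>"
  proof -
    have "\<mu>^2*(\<mu>+2-M) = (M-1)*\<mu> + M*(\<mu>+2-M)" using mu(3) unfolding g_def by simp
    moreover have "(M-1)*c + M/\<mu> = ((M-1)*\<mu> + M*(\<mu>+2-M)) / (\<mu>*(\<mu>+2-M))"
      unfolding c_def using mp by (simp add: field_simps)
    ultimately have "(M-1)*c + M/\<mu> = (\<mu>*\<mu>*(\<mu>+2-M)) / (\<mu>*(\<mu>+2-M))" by (simp add: power2_eq_square)
    then show ?thesis using mp by simp
  qed
  have cd: "c * (\<mu>+2-M) = 1" unfolding c_def using mp by simp
  have "1 + (M-1)*c - c = c * (\<mu>+2-M) + (M-1)*c - c" by (simp add: cd)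
  then have key1: "1 + (M-1)*c - c = \<mu> * c" by (simp add: algebra_simps)
  have Aw: "?A *\<^sub>v w = \<mu> \<cdot>\<^sub>v w"
  proof (rule eq_vecI)
    fix i assume "i < dim_vec (\<mu> \<cdot>\<^sub>v w)"
    then have i: "i < 2*m" using dw by simp
    have R: "(?A *\<^sub>v w) $ i = (if i = 0 then (\<Sum>j\<in>{0..<m}. w$j) - w$0 + (\<Sum>j\<in>{m..<2*m}. w$j)
      else if i < m then (\<Sum>j\<in>{0..<m}. w$j) - w$i else w$0)" by (rule row_gyro[OF n m i dw])
    have w0: "w$0 = 1" unfolding w_def using m4 by simp
    show "(?A *\<^sub>v w) $ i = (\<mu> \<cdot>\<^sub>v w) $ i"
    proof (cases "i = 0")
      case True
      then show ?thesis using R S T w0 key0 dw i by simp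
    next
      case F: False
      show ?thesis
      proof (cases "i < m")
        case True
        have "w$i = c" unfolding w_def using F True i by simp
        then show ?thesis using R S key1 F True dw i by simp
      next
        case False
        have "w$i = 1/\<mu>" unfolding w_def using F False i by simp
        then show ?thesis using R w0 F False dw i mp by simp
      qed
    qed
  qed (simp add: power_graph_adj_mat_def dw N)
  moreover have "w \<noteq> 0\<^sub>v (2*m)"
  proof
    assume "w = 0\<^sub>v (2*m)"
    then have "w $ 0 = 0" using m4 by simp
    then show False unfolding w_def using m4 by simp
  qed
  moreover have "dim_row ?A = 2^n" unfolding power_graph_adj_mat_def by (rule dim_row_mat)
  moreover have "w \<in> carrier_vec (2*m)" using dw by (simp only: carrier_vec_def mem_Collect_eq)
  ultimately have "eigenvector ?A w \<mu>" unfolding eigenvector_def N by metis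
  then have "eigenvalue ?A \<mu>" unfolding eigenvalue_def by blast
  then show ?thesis using mu1 unfolding M_def by blast
qed


theorem mainTheorem9:
  fixes n :: nat
  assumes "n \<ge> 3"
  shows "lambda1 (power_graph_adj_mat (2 ^ (n - 1)) (cyc_op (2 ^ (n - 1))))
           < lambda1 (power_graph_adj_mat (2 ^ n) (gyro_op n))
      \<and> lambda1 (power_graph_adj_mat (2 ^ n) (gyro_op n))
           \<le> lambda1 (power_graph_adj_mat (2 ^ (n - 1)) (cyc_op (2 ^ (n - 1)))) + sqrt (2 ^ (n - 1))"
proof -
  define m :: nat where "m = 2^(n-1)"
  have m4: "m \<ge> 4" using m_facts[OF assms] unfolding m_def by simp
  have L1: "lambda1 (power_graph_adj_mat m (cyc_op m)) = real m - 1"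
    using cyc_lambda1[OF m_def] m4 by simp
  let ?A = "power_graph_adj_mat (2^n) (gyro_op n)"
  have car: "?A \<in> carrier_mat (2^n) (2^n)" unfolding power_graph_adj_mat_def by simp
  have fin: "finite {x. eigenvalue ?A x}" by (rule eig_finite[OF car])
  obtain \<mu> where mu: "eigenvalue ?A \<mu>" "\<mu> > real m - 1" using gyro_exists[OF assms m_def] by blast
  have ne: "{x. eigenvalue ?A x} \<noteq> {}" using mu by blast
  have "\<mu> \<le> lambda1 ?A" unfolding lambda1_def using fin mu by (intro Max_ge) auto
  then have lo: "real m - 1 < lambda1 ?A" using mu by simp
  have "lambda1 ?A \<in> {x. eigenvalue ?A x}" unfolding lambda1_def using fin ne by (rule Max_in)
  then have "lambda1 ?A \<le> real m" using gyro_upper[OF assms m_def] by blast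
  moreover have "sqrt (real m) \<ge> 1" using m4 by simp
  ultimately have up: "lambda1 ?A \<le> real m - 1 + sqrt (real m)" by linarith
  have rm: "real m = 2^(n-1)" unfolding m_def by simp
  show ?thesis using lo up L1 unfolding m_def[symmetric] rm[symmetric] by simp
qed

end
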